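(* There exists a family of quantum circuits, one for each $n\ge1$, of depth $O(1)$ (independent of $n$) and size $O(n2^n)$, such that the $n$-th circuit implements exactly the quantum operation $\mathrm{OR}_n$.
   Context: Quantum circuits are built from elementary gates: arbitrary one-qubit gates, CNOT gates, and unbounded fan-out gates. An unbounded fan-out gate on $k+1$ qubits ($k\ge1$) maps $|y\rangle\bigotimes_{j=0}^{k-1}|x_j\rangle \mapsto |y\rangle\bigotimes_{j=0}^{k-1}|x_j\oplus y\rangle$. Circuits may use ancillary qubits initialized to $|0\rangle$. The size of a circuit is the total over its gates of the number of qubits each gate acts on; the depth is the number of layers (input qubits have depth 0, a gate has depth 1 plus the maximal depth of gates it depends on). $\mathrm{OR}_n(x)=1$ if $x\in\{0,1\}^n$ is nonzero and $0$ otherwise; the quantum operation $\mathrm{OR}_n$ maps $\bigl(\bigotimes_{j=0}^{n-1}|x_j\rangle\bigr)|z\rangle\mapsto\bigl(\bigotimes_{j}|x_j\rangle\bigr)|z\oplus\mathrm{OR}_n(x)\rangle$. *)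

theory Defs
  imports Complex_Main
begin

text \<open>A computational basis state is a function nat => bool (wire i holds bit b i);
  a state is an amplitude function on basis states.\<close>

datatype gate =
    G1 nat "bool \<Rightarrow> bool \<Rightarrow> complex"   (* one-qubit gate U on wire q; U out in *)
  | CNOT nat nat                          (* control, target *)
  | Fanout nat "nat list"                 (* control y, targets x_0 .. x_{k-1} *)

type_synonym state = "(nat \<Rightarrow> bool) \<Rightarrow> complex"

fun gate_wires :: "gate \<Rightarrow> nat list" where
  "gate_wires (G1 q U) = [q]"
| "gate_wires (CNOT c t) = [c, t]"
| "gate_wires (Fanout y ts) = y # ts"

definition unitary2 :: "(bool \<Rightarrow> bool \<Rightarrow> complex) \<Rightarrow> bool" where
  "unitary2 U \<longleftrightarrow> (\<forall>i j. (\<Sum>k\<in>UNIV. cnj (U k i) * U k j) = (if i = j then 1 else 0))"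

fun gate_wf :: "nat \<Rightarrow> gate \<Rightarrow> bool" where
  "gate_wf m (G1 q U) \<longleftrightarrow> q < m \<and> unitary2 U"
| "gate_wf m (CNOT c t) \<longleftrightarrow> c < m \<and> t < m \<and> c \<noteq> t"
| "gate_wf m (Fanout y ts) \<longleftrightarrow> y < m \<and> (\<forall>t\<in>set ts. t < m) \<and> ts \<noteq> [] \<and>
      distinct ts \<and> y \<notin> set ts"

definition circuit_wf :: "nat \<Rightarrow> gate list \<Rightarrow> bool" where
  "circuit_wf m gs \<longleftrightarrow> (\<forall>g\<in>set gs. gate_wf m g)"

fun apply_gate :: "gate \<Rightarrow> state \<Rightarrow> state" where
  "apply_gate (G1 q U) \<psi> = (\<lambda>b. \<Sum>v\<in>UNIV. U (b q) v * \<psi> (b(q := v)))"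
| "apply_gate (CNOT c t) \<psi> = (\<lambda>b. \<psi> (b(t := (b t \<noteq> b c))))"
| "apply_gate (Fanout y ts) \<psi> = (\<lambda>b. \<psi> (\<lambda>i. if i \<in> set ts then b i \<noteq> b y else b i))"

definition apply_circuit :: "gate list \<Rightarrow> state \<Rightarrow> state" where
  "apply_circuit gs \<psi> = fold apply_gate gs \<psi>"

definition ket :: "(nat \<Rightarrow> bool) \<Rightarrow> state" where
  "ket b = (\<lambda>b'. if b' = b then 1 else 0)"

definition circuit_size :: "gate list \<Rightarrow> nat" where
  "circuit_size gs = (\<Sum>g\<leftarrow>gs. length (gate_wires g))"

text \<open>Depth: each wire carries the depth of the last gate on it (0 initially);
  a gate has depth 1 + max depth of its wires; circuit depth is the max gate depth.\<close>
definition layer_step :: "(nat \<Rightarrow> nat) \<times> nat \<Rightarrow> gate \<Rightarrow> (nat \<Rightarrow> nat) \<times> nat" where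
  "layer_step s g = (let dw = fst s; W = set (gate_wires g); d = Suc (Max (dw ` W))
                     in (\<lambda>i. if i \<in> W then d else dw i, max (snd s) d))"

definition circuit_depth :: "gate list \<Rightarrow> nat" where
  "circuit_depth gs = snd (foldl layer_step (\<lambda>_. 0, 0) gs)"

definition OR_fun :: "nat \<Rightarrow> (nat \<Rightarrow> bool) \<Rightarrow> bool" where
  "OR_fun n x \<longleftrightarrow> (\<exists>j<n. x j)"

definition layout :: "nat \<Rightarrow> (nat \<Rightarrow> bool) \<Rightarrow> bool \<Rightarrow> nat \<Rightarrow> bool" where
  "layout n x z = (\<lambda>i. if i < n then x i else if i = n then z else False)"

text \<open>Exact implementation of OR_n with clean ancillas: on every basis input
  |x>|z>|0..0> the circuit outputs |x>|z xor OR_n(x)>|0..0>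
  (by linearity this determines the action on the whole input subspace).\<close>
definition implements_OR :: "nat \<Rightarrow> nat \<Rightarrow> gate list \<Rightarrow> bool" where
  "implements_OR n m gs \<longleftrightarrow> n + 1 \<le> m \<and> circuit_wf m gs \<and>
     (\<forall>x z. apply_circuit gs (ket (layout n x z)) = ket (layout n x (z \<noteq> OR_fun n x)))"

end

theory Submission
  imports Defs
begin


lemma AC_Nil[simp]: "apply_circuit [] \<psi> = \<psi>" by (simp add: apply_circuit_def)
lemma AC_Cons[simp]: "apply_circuit (g#gs) \<psi> = apply_circuit gs (apply_gate g \<psi>)"
  by (simp add: apply_circuit_def)
lemma AC_app: "apply_circuit (xs@ys) \<psi> = apply_circuit ys (apply_circuit xs \<psi>)"
  by (simp add: apply_circuit_def)

definition disj :: "gate \<Rightarrow> gate \<Rightarrow> bool" where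
  "disj g h \<longleftrightarrow> set (gate_wires g) \<inter> set (gate_wires h) = {}"

lemma gate_comm:
  assumes "disj g h"
  shows "apply_gate g (apply_gate h \<psi>) = apply_gate h (apply_gate g \<psi>)"
proof (cases g)
  case (G1 q U)
  show ?thesis
  proof (cases h)
    case (G1 r V)
    with \<open>g = _\<close> assms have qr: "q \<noteq> r" by (auto simp: disj_def)
    show ?thesis using G1 \<open>g = _\<close> qr
      by (auto simp: sum_distrib_left fun_upd_twist mult.left_commute intro!: ext sum.swap[THEN trans])
  next
    case (CNOT c t)
    with \<open>g = _\<close> assms show ?thesis by (auto simp: disj_def fun_upd_twist intro!: ext sum.cong)
  next
    case (Fanout y ts)
    with \<open>g = _\<close> assms show ?thesis
      by (auto simp: disj_def intro!: ext sum.cong arg_cong[where f="\<psi>"] split: if_splits)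
  qed
next
  case (CNOT c t)
  show ?thesis
  proof (cases h)
    case (G1 r V)
    with \<open>g = _\<close> assms show ?thesis by (auto simp: disj_def fun_upd_twist intro!: ext sum.cong)
  next
    case (CNOT c' t')
    with \<open>g = _\<close> assms show ?thesis by (auto simp: disj_def fun_upd_twist intro!: ext)
  next
    case (Fanout y ts)
    with \<open>g = _\<close> assms show ?thesis
      by (auto simp: disj_def intro!: ext arg_cong[where f="\<psi>"] split: if_splits)
  qed
next
  case (Fanout y ts)
  show ?thesis
  proof (cases h)
    case (G1 r V)
    with \<open>g = _\<close> assms show ?thesis
      by (auto simp: disj_def intro!: ext sum.cong arg_cong[where f="\<psi>"] split: if_splits)
  next
    case (CNOT c' t')
    with \<open>g = _\<close> assms show ?thesis
      by (auto simp: disj_def intro!: ext arg_cong[where f="\<psi>"] split: if_splits)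
  next
    case (Fanout y' ts')
    with \<open>g = _\<close> assms show ?thesis
      by (auto simp: disj_def intro!: ext arg_cong[where f="\<psi>"] split: if_splits)
  qed
qed


lemma gate_lin: "apply_gate g (\<lambda>b. c * \<psi> b + d * \<chi> b) = (\<lambda>b. c * apply_gate g \<psi> b + d * apply_gate g \<chi> b)"
  by (cases g) (auto simp: algebra_simps sum.distrib sum_distrib_left intro!: ext sum.cong)

lemma gate_scal: "apply_gate g (\<lambda>b. c * \<psi> b) = (\<lambda>b. c * apply_gate g \<psi> b)"
  by (cases g) (auto simp: algebra_simps sum_distrib_left intro!: ext sum.cong)

lemma AC_lin: "apply_circuit gs (\<lambda>b. c * \<psi> b + d * \<chi> b) = (\<lambda>b. c * apply_circuit gs \<psi> b + d * apply_circuit gs \<chi> b)"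
  by (induction gs arbitrary: \<psi> \<chi>) (auto simp: gate_lin)

lemma AC_scal: "apply_circuit gs (\<lambda>b. c * \<psi> b) = (\<lambda>b. c * apply_circuit gs \<psi> b)"
  by (induction gs arbitrary: \<psi>) (auto simp: gate_scal)

lemma G1_ket: "apply_gate (G1 q U) (ket b0) = (\<lambda>b. U False (b0 q) * ket (b0(q:=False)) b + U True (b0 q) * ket (b0(q:=True)) b)"
proof (rule ext)
  fix b :: "nat \<Rightarrow> bool"
  have u: "UNIV = {True, False}" by auto
  show "apply_gate (G1 q U) (ket b0) b = U False (b0 q) * ket (b0(q:=False)) b + U True (b0 q) * ket (b0(q:=True)) b"
    by (cases "b0 q"; cases "b q") (auto simp: ket_def u fun_eq_iff)
qed

definition Hd :: "bool \<Rightarrow> bool \<Rightarrow> complex" where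
  "Hd u v = complex_of_real ((if u \<and> v then -1 else 1) / sqrt 2)"

lemma Hd_mult: "Hd a b * Hd c d = (if (a \<and> b) = (c \<and> d) then 1/2 else -1/2)"
  by (auto simp: Hd_def simp flip: of_real_mult)

definition hh :: complex where "hh = complex_of_real (1 / sqrt 2)"
lemma hh2: "hh * hh = 1/2" by (simp add: hh_def flip: of_real_mult)
lemma hh3: "hh * (hh * x) = x/2" by (simp add: mult.assoc[symmetric] hh2)
lemma Hd_eq: "Hd u v = (if u \<and> v then - hh else hh)" by (simp add: Hd_def hh_def)

lemma UNIV_bool': "(UNIV :: bool set) = {True, False}" by auto

lemma HH: "apply_gate (G1 q Hd) (apply_gate (G1 q Hd) \<psi>) = \<psi>"
proof (rule ext)
  fix b :: "nat \<Rightarrow> bool"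
  show "apply_gate (G1 q Hd) (apply_gate (G1 q Hd) \<psi>) b = \<psi> b"
  proof (cases "b q")
    case True
    then have e: "b(q := True) = b" by (simp add: fun_upd_idem)
    show ?thesis using True by (simp add: UNIV_bool' Hd_eq hh2 hh3 e ring_distribs)
  next
    case False
    then have e: "b(q := False) = b" by (simp add: fun_upd_idem)
    show ?thesis using False by (simp add: UNIV_bool' Hd_eq hh2 hh3 e ring_distribs)
  qed
qed


definition disjL :: "gate list \<Rightarrow> gate list \<Rightarrow> bool" where
  "disjL xs ys \<longleftrightarrow> (\<forall>g\<in>set xs. \<forall>h\<in>set ys. disj g h)"

lemma swap1: "\<forall>h\<in>set ys. disj g h \<Longrightarrow> apply_circuit ys (apply_gate g \<psi>) = apply_gate g (apply_circuit ys \<psi>)"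
  by (induction ys arbitrary: \<psi>) (simp_all, metis gate_comm)

lemma swapL: "disjL xs ys \<Longrightarrow> apply_circuit (xs@ys) \<psi> = apply_circuit (ys@xs) \<psi>"
proof (induction xs arbitrary: \<psi>)
  case Nil then show ?case by simp
next
  case (Cons x xs)
  have "apply_circuit ((x#xs)@ys) \<psi> = apply_circuit (ys@xs) (apply_gate x \<psi>)"
    using Cons by (simp add: disjL_def)
  also have "\<dots> = apply_circuit xs (apply_circuit ys (apply_gate x \<psi>))" by (simp add: AC_app)
  also have "\<dots> = apply_circuit xs (apply_gate x (apply_circuit ys \<psi>))"
    using Cons.prems by (simp add: disjL_def swap1)
  also have "\<dots> = apply_circuit (ys@x#xs) \<psi>" by (simp add: AC_app)
  finally show ?case .
qed

lemma swap4: "disjL ys zs \<Longrightarrow> apply_circuit (xs@ys@zs@ws) \<psi> = apply_circuit (xs@zs@ys@ws) \<psi>"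
  using swapL[of ys zs] by (simp add: AC_app append_assoc[symmetric] del: append_assoc)

lemma CZ: assumes "t \<noteq> y"
  shows "apply_circuit [G1 t Hd, CNOT y t, G1 t Hd] \<psi> = (\<lambda>b. (if b y \<and> b t then -1 else 1) * \<psi> b)"
proof (rule ext)
  fix b :: "nat \<Rightarrow> bool"
  show "apply_circuit [G1 t Hd, CNOT y t, G1 t Hd] \<psi> b = (if b y \<and> b t then -1 else 1) * \<psi> b"
  proof (cases "b t")
    case True
    then have e: "b(t := True) = b" by (simp add: fun_upd_idem)
    show ?thesis using True assms by (cases "b y") (simp_all add: UNIV_bool' Hd_eq hh2 hh3 e ring_distribs)
  next
    case False
    then have e: "b(t := False) = b" by (simp add: fun_upd_idem)
    show ?thesis using False assms by (cases "b y") (simp_all add: UNIV_bool' Hd_eq hh2 hh3 e ring_distribs)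
  qed
qed

lemma Hconj: assumes P: "\<And>b v. P (b(y:=v)) = P b"
  shows "apply_gate (G1 y Hd) (\<lambda>b. (if b y \<and> P b then -1 else 1) * apply_gate (G1 y Hd) \<psi> b)
    = (\<lambda>b. \<psi> (b(y := b y \<noteq> P b)))"
proof (rule ext)
  fix b :: "nat \<Rightarrow> bool"
  show "apply_gate (G1 y Hd) (\<lambda>b. (if b y \<and> P b then -1 else 1) * apply_gate (G1 y Hd) \<psi> b) b
     = \<psi> (b(y := b y \<noteq> P b))"
  proof (cases "b y")
    case True
    then have e: "b(y := True) = b" by (simp add: fun_upd_idem)
    show ?thesis using True by (cases "P b") (simp_all add: UNIV_bool' Hd_eq hh2 hh3 e ring_distribs P)
  next
    case False
    then have e: "b(y := False) = b" by (simp add: fun_upd_idem)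
    show ?thesis using False by (cases "P b") (simp_all add: UNIV_bool' Hd_eq hh2 hh3 e ring_distribs P)
  qed
qed

lemma fan_decomp: assumes "t \<notin> set T" "y \<notin> set T" "t \<noteq> y"
  shows "apply_gate (Fanout y (t#T)) \<psi> = apply_gate (CNOT y t) (apply_gate (Fanout y T) \<psi>)"
  using assms by (auto intro!: ext arg_cong[where f="\<psi>"])


definition Hq :: "nat \<Rightarrow> gate" where "Hq q = G1 q Hd"

definition par :: "(nat \<Rightarrow> bool) \<Rightarrow> nat list \<Rightarrow> bool" where
  "par b T = foldr (\<lambda>t acc. b t \<noteq> acc) T False"

lemma par_Nil[simp]: "par b [] = False" by (simp add: par_def)
lemma par_Cons[simp]: "par b (t#T) = (b t \<noteq> par b T)" by (simp add: par_def)

lemma par_cong: "(\<And>t. t \<in> set T \<Longrightarrow> b t = b' t) \<Longrightarrow> par b T = par b' T"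
  by (induction T) auto

lemma Dlem: "distinct (y#T) \<Longrightarrow>
  apply_circuit (map Hq T @ [Fanout y T] @ map Hq T) \<psi> = (\<lambda>b. (if b y \<and> par b T then -1 else 1) * \<psi> b)"
proof (induction T arbitrary: \<psi>)
  case Nil then show ?case by simp
next
  case (Cons t T)
  let ?HT = "map Hq T"
  have d: "t \<notin> set T" "y \<notin> set T" "t \<noteq> y" "distinct (y#T)" using Cons.prems by auto
  have "apply_circuit (map Hq (t#T) @ [Fanout y (t#T)] @ map Hq (t#T)) \<psi>
      = apply_circuit ([] @ [Hq t] @ (?HT @ [Fanout y T]) @ ([CNOT y t] @ [Hq t] @ ?HT)) \<psi>"
    by (simp only: list.map append.simps append_assoc AC_app AC_Cons AC_Nil fan_decomp[OF d(1-3)])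
  also have "\<dots> = apply_circuit ([] @ (?HT @ [Fanout y T]) @ [Hq t] @ ([CNOT y t] @ [Hq t] @ ?HT)) \<psi>"
    by (rule swap4) (use d in \<open>auto simp: disjL_def disj_def Hq_def\<close>)
  also have "\<dots> = apply_circuit ((?HT @ [Fanout y T]) @ [Hq t, CNOT y t, Hq t] @ ?HT @ []) \<psi>" by simp
  also have "\<dots> = apply_circuit ((?HT @ [Fanout y T]) @ ?HT @ [Hq t, CNOT y t, Hq t] @ []) \<psi>"
    by (rule swap4) (use d in \<open>auto simp: disjL_def disj_def Hq_def\<close>)
  also have "\<dots> = apply_circuit [Hq t, CNOT y t, Hq t] (apply_circuit (?HT @ [Fanout y T] @ ?HT) \<psi>)"
    by (simp add: AC_app)
  also have "\<dots> = (\<lambda>b. (if b y \<and> b t then -1 else 1) * ((if b y \<and> par b T then -1 else 1) * \<psi> b))"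
    by (simp only: Cons.IH[OF d(4)] CZ[OF d(3), folded Hq_def])
  also have "\<dots> = (\<lambda>b. (if b y \<and> par b (t#T) then -1 else 1) * \<psi> b)"
    by (auto intro!: ext)
  finally show ?case .
qed

lemma block: assumes "distinct (y#T)"
  shows "apply_circuit (map Hq (y#T) @ [Fanout y T] @ map Hq (y#T)) \<psi> = (\<lambda>b. \<psi> (b(y := b y \<noteq> par b T)))"
proof -
  have "apply_circuit (map Hq (y#T) @ [Fanout y T] @ map Hq (y#T)) \<psi>
     = apply_circuit ([Hq y] @ (map Hq T @ [Fanout y T]) @ [Hq y] @ map Hq T) \<psi>" by simp
  also have "\<dots> = apply_circuit (([Hq y] @ (map Hq T @ [Fanout y T])) @ [Hq y] @ map Hq T @ []) \<psi>" by simp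
  also have "\<dots> = apply_circuit (([Hq y] @ (map Hq T @ [Fanout y T])) @ map Hq T @ [Hq y] @ []) \<psi>"
    by (rule swap4) (use assms in \<open>auto simp: disjL_def disj_def Hq_def\<close>)
  also have "\<dots> = apply_gate (G1 y Hd) (\<lambda>b. (if b y \<and> par b T then -1 else 1) * apply_gate (G1 y Hd) \<psi> b)"
    using Dlem[OF assms] by (simp add: AC_app Hq_def)
  also have "\<dots> = (\<lambda>b. \<psi> (b(y := b y \<noteq> par b T)))"
  proof (rule Hconj)
    fix b v show "par (b(y:=v)) T = par b T" using assms by (intro par_cong) auto
  qed
  finally show ?thesis .
qed


definition wl :: "(nat \<times> nat list) list \<Rightarrow> nat list" where
  "wl L = concat (map (\<lambda>(y,T). y#T) L)"

lemma wl_Nil[simp]: "wl [] = []" and wl_Cons[simp]: "wl ((y,T)#L) = y # T @ wl L"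
  by (simp_all add: wl_def)

definition HBL :: "(nat \<times> nat list) list \<Rightarrow> gate list" where "HBL L = map Hq (wl L)"
definition FBL :: "(nat \<times> nat list) list \<Rightarrow> gate list" where "FBL L = map (\<lambda>(y,T). Fanout y T) L"

fun parmap :: "(nat \<times> nat list) list \<Rightarrow> (nat \<Rightarrow> bool) \<Rightarrow> (nat \<Rightarrow> bool)" where
  "parmap [] b = b"
| "parmap ((y,T)#L) b = (let b' = parmap L b in b'(y := b' y \<noteq> par b' T))"

fun fomap :: "(nat \<times> nat list) list \<Rightarrow> (nat \<Rightarrow> bool) \<Rightarrow> (nat \<Rightarrow> bool)" where
  "fomap [] b = b"
| "fomap ((y,T)#L) b = (let b' = fomap L b in (\<lambda>i. if i \<in> set T then b' i \<noteq> b' y else b' i))"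

lemma set_wl: "set (wl L) = (\<Union>(y,T)\<in>set L. insert y (set T))"
  by (auto simp: wl_def)

lemma PAR: "distinct (wl L) \<Longrightarrow> apply_circuit (HBL L @ FBL L @ HBL L) \<psi> = \<psi> \<circ> parmap L"
proof (induction L arbitrary: \<psi>)
  case Nil then show ?case by (simp add: HBL_def FBL_def o_def)
next
  case (Cons p L)
  obtain y T where p: "p = (y,T)" by (cases p)
  let ?B = "map Hq (y#T)" and ?R = "HBL L" and ?F = "Fanout y T" and ?FR = "FBL L"
  have d: "distinct (y#T)" "distinct (wl L)" "set (y#T) \<inter> set (wl L) = {}"
    using Cons.prems p by auto
  have swR: "set (gate_wires g) \<subseteq> set (wl L)" if "g \<in> set ?R \<union> set ?FR" for g
    using that by (auto simp: HBL_def FBL_def Hq_def set_wl)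
  have swB: "set (gate_wires g) \<subseteq> set (y#T)" if "g \<in> set ?B \<union> {?F}" for g
    using that by (auto simp: Hq_def)
  have dis: "disjL xs ys" if "set xs \<subseteq> set ?R \<union> set ?FR" "set ys \<subseteq> set ?B \<union> {?F}" for xs ys
    unfolding disjL_def disj_def using that swR swB d(3) by blast
  have dis': "disjL ys xs" if "set xs \<subseteq> set ?R \<union> set ?FR" "set ys \<subseteq> set ?B \<union> {?F}" for xs ys
    unfolding disjL_def disj_def using that swR swB d(3) by blast
  have "apply_circuit (HBL (p#L) @ FBL (p#L) @ HBL (p#L)) \<psi>
      = apply_circuit (?B @ ?R @ [?F] @ (?FR @ ?B @ ?R)) \<psi>"
    by (simp add: p HBL_def FBL_def)
  also have "\<dots> = apply_circuit (?B @ [?F] @ ?R @ (?FR @ ?B @ ?R)) \<psi>"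
    by (rule swap4, rule dis) auto
  also have "\<dots> = apply_circuit ((?B @ [?F]) @ (?R @ ?FR) @ ?B @ ?R) \<psi>" by simp
  also have "\<dots> = apply_circuit ((?B @ [?F]) @ ?B @ (?R @ ?FR) @ ?R) \<psi>"
    by (rule swap4, rule dis) auto
  also have "\<dots> = apply_circuit (?R @ ?FR @ ?R) (apply_circuit (?B @ [?F] @ ?B) \<psi>)"
    by (simp add: AC_app)
  also have "\<dots> = (\<lambda>b. \<psi> (b(y := b y \<noteq> par b T))) \<circ> parmap L"
    using block[OF d(1)] Cons.IH[OF d(2)] by (simp add: HBL_def FBL_def o_def)
  also have "\<dots> = \<psi> \<circ> parmap (p#L)" by (simp add: p o_def Let_def)
  finally show ?case .
qed

lemma FOL: "apply_circuit (FBL L) \<psi> = \<psi> \<circ> fomap L"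
proof (induction L arbitrary: \<psi>)
  case Nil then show ?case by (simp add: FBL_def o_def)
next
  case (Cons p L)
  obtain y T where p: "p = (y,T)" by (cases p)
  show ?case using Cons.IH by (simp add: p FBL_def o_def Let_def)
qed

lemma wl_disj: "distinct (wl L) \<Longrightarrow> (y,T) \<in> set L \<Longrightarrow> (y',T') \<in> set L \<Longrightarrow> y' \<notin> set T"
proof (induction L)
  case Nil then show ?case by simp
next
  case (Cons p L)
  obtain a A where p: "p = (a,A)" by (cases p)
  show ?case using Cons unfolding p by (force simp: set_wl)
qed

lemma pm2: "i \<notin> fst ` set L \<Longrightarrow> parmap L b i = b i"
  by (induction L b rule: parmap.induct) (auto simp: Let_def)

lemma pm1: "distinct (wl L) \<Longrightarrow> (y,T) \<in> set L \<Longrightarrow> parmap L b y = (b y \<noteq> par b T)"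
proof (induction L b rule: parmap.induct)
  case (1 b) then show ?case by simp
next
  case (2 y' T' L b)
  show ?case
  proof (cases "(y,T) = (y',T')")
    case True
    then have yy: "y = y'" "T = T'" by auto
    have "y \<notin> fst ` set L" "\<forall>t\<in>set T. t \<notin> fst ` set L" using 2(2) True by (force simp: set_wl)+
    then have "par (parmap L b) T' = par b T'" using yy by (intro par_cong) (auto simp: pm2)
    then show ?thesis using True \<open>y \<notin> fst ` set L\<close> by (auto simp: Let_def pm2)
  next
    case False
    then have "(y,T) \<in> set L" using 2(3) by auto
    moreover have "y \<noteq> y'" using 2(2) \<open>(y,T) \<in> set L\<close> by (force simp: set_wl)
    ultimately show ?thesis using 2 by (auto simp: Let_def)
  qed
qed

lemma pm_inv: assumes "distinct (wl L)" shows "parmap L (parmap L b) = b"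
proof (rule ext)
  fix i
  show "parmap L (parmap L b) i = b i"
  proof (cases "i \<in> fst ` set L")
    case True
    then obtain T where iT: "(i,T) \<in> set L" by force
    have "\<forall>t\<in>set T. t \<notin> fst ` set L"
    proof
      fix t assume "t \<in> set T"
      show "t \<notin> fst ` set L"
      proof
        assume "t \<in> fst ` set L"
        then obtain T' where "(t,T') \<in> set L" by force
        then show False using wl_disj[OF assms iT] \<open>t \<in> set T\<close> by blast
      qed
    qed
    then have "par (parmap L b) T = par b T" by (auto simp: pm2 intro!: par_cong)
    then show ?thesis using pm1[OF assms iT, of "parmap L b"] pm1[OF assms iT, of b] by auto
  next
    case False then show ?thesis by (simp add: pm2)
  qed
qed

lemma fo2: "(\<forall>(y,T)\<in>set L. i \<notin> set T) \<Longrightarrow> fomap L b i = b i"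
  by (induction L b rule: fomap.induct) (auto simp: Let_def)

lemma fo1: "distinct (wl L) \<Longrightarrow> (y,T) \<in> set L \<Longrightarrow> i \<in> set T \<Longrightarrow> fomap L b i = (b i \<noteq> b y)"
proof (induction L b rule: fomap.induct)
  case (1 b) then show ?case by simp
next
  case (2 y' T' L b)
  show ?case
  proof (cases "(y,T) = (y',T')")
    case True
    then have "\<forall>(y,T)\<in>set L. i \<notin> set T" "\<forall>(y'',T)\<in>set L. y \<notin> set T" using 2(2,4) by (force simp: set_wl)+
    then show ?thesis using True 2(4) by (auto simp: Let_def fo2)
  next
    case False
    then have "(y,T) \<in> set L" using 2(3) by auto
    moreover have "i \<notin> set T'" using 2(2,4) \<open>(y,T) \<in> set L\<close> by (force simp: set_wl)
    ultimately show ?thesis using 2 by (auto simp: Let_def)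
  qed
qed

lemma fo_inv: assumes "distinct (wl L)" shows "fomap L (fomap L b) = b"
proof (rule ext)
  fix i
  show "fomap L (fomap L b) i = b i"
  proof (cases "\<exists>(y,T)\<in>set L. i \<in> set T")
    case True
    then obtain y T where iT: "(y,T) \<in> set L" "i \<in> set T" by force
    have "\<forall>(y',T')\<in>set L. y \<notin> set T'"
      using wl_disj[OF assms _ iT(1)] by blast
    then have "fomap L b y = b y" by (intro fo2) auto
    then show ?thesis using fo1[OF assms iT, of "fomap L b"] fo1[OF assms iT, of b] by auto
  next
    case False
    then have h: "\<forall>(y,T)\<in>set L. i \<notin> set T" by auto
    show ?thesis using fo2[OF h, of "fomap L b"] fo2[OF h, of b] by simp
  qed
qed

lemma ket_inv: "(\<And>b. F (F b) = b) \<Longrightarrow> ket b0 \<circ> F = ket (F b0)"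
  unfolding ket_def o_def by (rule ext) metis


definition Pg :: "real \<Rightarrow> bool \<Rightarrow> bool \<Rightarrow> complex" where
  "Pg \<phi> u v = (if u = v then (if u then cis \<phi> else 1) else 0)"

definition PHL :: "real \<Rightarrow> nat list \<Rightarrow> gate list" where
  "PHL \<phi> qs = map (\<lambda>q. G1 q (Pg \<phi>)) qs"

definition phase :: "real \<Rightarrow> nat list \<Rightarrow> (nat \<Rightarrow> bool) \<Rightarrow> complex" where
  "phase \<phi> qs b = prod_list (map (\<lambda>q. if b q then cis \<phi> else 1) qs)"

lemma Pg_gate: "apply_gate (G1 q (Pg \<phi>)) \<psi> = (\<lambda>b. (if b q then cis \<phi> else 1) * \<psi> b)"
proof (rule ext)
  fix b :: "nat \<Rightarrow> bool"
  have "b(q := b q) = b" by simp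
  then show "apply_gate (G1 q (Pg \<phi>)) \<psi> b = (if b q then cis \<phi> else 1) * \<psi> b"
    by (cases "b q") (simp_all add: UNIV_bool' Pg_def)
qed

lemma PH_sem: "apply_circuit (PHL \<phi> qs) \<psi> = (\<lambda>b. phase \<phi> qs b * \<psi> b)"
  by (induction qs arbitrary: \<psi>) (auto simp: PHL_def phase_def Pg_gate mult.assoc mult.left_commute simp del: apply_gate.simps)

definition MidL :: "(nat \<times> nat list) list \<Rightarrow> (nat \<times> nat list) list \<Rightarrow> real \<Rightarrow> nat list \<Rightarrow> gate list list" where
  "MidL L1 L2 \<phi> qs = [FBL L1, HBL L2, FBL L2, HBL L2, PHL \<phi> qs, HBL L2, FBL L2, HBL L2, FBL L1]"

lemma Mid_sem: assumes "distinct (wl L1)" "distinct (wl L2)"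
  shows "apply_circuit (concat (MidL L1 L2 \<phi> qs)) (ket b0)
    = (\<lambda>b. phase \<phi> qs (parmap L2 (fomap L1 b0)) * ket b0 b)"
proof -
  let ?b1 = "fomap L1 b0" let ?b2 = "parmap L2 ?b1"
  let ?PAR = "HBL L2 @ FBL L2 @ HBL L2"
  have k1: "apply_circuit (FBL L1) (ket b) = ket (fomap L1 b)" for b
    by (simp add: FOL ket_inv fo_inv[OF assms(1)])
  have k2: "apply_circuit ?PAR (ket b) = ket (parmap L2 b)" for b
    by (simp add: PAR[OF assms(2)] ket_inv pm_inv[OF assms(2)])
  have k3: "apply_circuit (PHL \<phi> qs) (ket b) = (\<lambda>x. phase \<phi> qs b * ket b x)" for b
    by (auto simp: PH_sem ket_def intro!: ext)
  have "apply_circuit (concat (MidL L1 L2 \<phi> qs)) (ket b0)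
      = apply_circuit (FBL L1) (apply_circuit ?PAR (apply_circuit (PHL \<phi> qs) (apply_circuit ?PAR (apply_circuit (FBL L1) (ket b0)))))"
    by (simp add: MidL_def AC_app)
  also have "\<dots> = (\<lambda>b. phase \<phi> qs ?b2 * ket (fomap L1 (parmap L2 ?b2)) b)"
    by (simp add: k1 k2 k3 AC_scal)
  also have "\<dots> = (\<lambda>b. phase \<phi> qs ?b2 * ket b0 b)"
    by (simp add: pm_inv[OF assms(2)] fo_inv[OF assms(1)])
  finally show ?thesis .
qed


definition UL :: "(nat \<times> nat list) list \<Rightarrow> (nat \<times> nat list) list \<Rightarrow> real \<Rightarrow> nat list \<Rightarrow> nat \<Rightarrow> gate list list" where
  "UL L1 L2 \<phi> qs a = [[Hq a]] @ MidL L1 L2 \<phi> qs @ [[Hq a]]"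

lemma U_sem: fixes c :: "nat \<Rightarrow> bool" and a :: nat and \<phi> :: real and qs :: "nat list"
  assumes "distinct (wl L1)" "distinct (wl L2)"
  defines "e \<equiv> \<lambda>v. phase \<phi> qs (parmap L2 (fomap L1 (c(a:=v))))"
  shows "apply_circuit (concat (UL L1 L2 \<phi> qs a)) (ket (c(a:=\<alpha>)))
    = (\<lambda>b. (Hd False \<alpha> * Hd False False * e False + Hd True \<alpha> * Hd False True * e True) * ket (c(a:=False)) b
         + (Hd False \<alpha> * Hd True False * e False + Hd True \<alpha> * Hd True True * e True) * ket (c(a:=True)) b)"
proof -
  have h1: "apply_gate (G1 a Hd) (ket (c(a:=v))) = (\<lambda>b. Hd False v * ket (c(a:=False)) b + Hd True v * ket (c(a:=True)) b)" for v
    by (simp add: G1_ket del: apply_gate.simps)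
  have m: "apply_circuit (concat (MidL L1 L2 \<phi> qs)) (ket (c(a:=v))) = (\<lambda>b. e v * ket (c(a:=v)) b)" for v
    unfolding e_def by (rule Mid_sem[OF assms(1,2)])
  have "apply_circuit (concat (UL L1 L2 \<phi> qs a)) (ket (c(a:=\<alpha>)))
     = apply_gate (G1 a Hd) (apply_circuit (concat (MidL L1 L2 \<phi> qs)) (apply_gate (G1 a Hd) (ket (c(a:=\<alpha>)))))"
    by (simp add: UL_def AC_app Hq_def del: apply_gate.simps)
  also have "\<dots> = apply_gate (G1 a Hd) (\<lambda>b. Hd False \<alpha> * (e False * ket (c(a:=False)) b) + Hd True \<alpha> * (e True * ket (c(a:=True)) b))"
    by (simp only: h1 AC_lin m)
  also have "\<dots> = apply_gate (G1 a Hd) (\<lambda>b. (Hd False \<alpha> * e False) * ket (c(a:=False)) b + (Hd True \<alpha> * e True) * ket (c(a:=True)) b)"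
    by (simp add: mult.assoc)
  also have "\<dots> = (\<lambda>b. (Hd False \<alpha> * e False) * (Hd False False * ket (c(a:=False)) b + Hd True False * ket (c(a:=True)) b)
       + (Hd True \<alpha> * e True) * (Hd False True * ket (c(a:=False)) b + Hd True True * ket (c(a:=True)) b))"
    by (simp only: gate_lin h1)
  also have "\<dots> = (\<lambda>b. (Hd False \<alpha> * Hd False False * e False + Hd True \<alpha> * Hd False True * e True) * ket (c(a:=False)) b
         + (Hd False \<alpha> * Hd True False * e False + Hd True \<alpha> * Hd True True * e True) * ket (c(a:=True)) b)"
    by (rule ext) (simp add: algebra_simps)
  finally show ?thesis .
qed


lemma b1: "(s::nat) < 2^n \<Longrightarrow> \<not> bit s n"
  by (metis bit_take_bit_iff take_bit_nat_eq_self_iff less_irrefl)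
lemma b3: "(s::nat) < 2^n \<Longrightarrow> i < n \<Longrightarrow> bit (s + 2^n) i = bit s i"
  by (metis bit_disjunctive_add_iff bit_exp_iff bit_take_bit_iff nat_neq_iff
    take_bit_nat_eq_self_iff)
lemma b2: "(s::nat) < 2^n \<Longrightarrow> bit (s + 2^n) n"
proof -
  assume a: "s < 2^n"
  have "\<forall>k. \<not> bit s k \<or> \<not> bit ((2::nat)^n) k"
    using a by (metis bit_exp_iff bit_take_bit_iff take_bit_nat_eq_self_iff less_irrefl)
  then show ?thesis by (simp add: bit_disjunctive_add_iff bit_exp_iff)
qed

definition pp :: "nat \<Rightarrow> (nat \<Rightarrow> bool) \<Rightarrow> nat \<Rightarrow> bool" where
  "pp n x s = foldr (\<lambda>i acc. x i \<noteq> acc) (filter (\<lambda>i. bit s i) [0..<n]) False"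

lemma foldr_x: "foldr (\<lambda>i acc. x i \<noteq> acc) xs c = (foldr (\<lambda>i acc. x i \<noteq> acc) xs False \<noteq> c)"
  by (induction xs) auto

lemma pp_Suc: "pp (Suc n) x s = (pp n x s \<noteq> (bit s n \<and> x n))"
proof -
  have "foldr (\<lambda>i acc. x i \<noteq> acc) (filter (\<lambda>i. bit s i) [0..<Suc n]) False
      = foldr (\<lambda>i acc. x i \<noteq> acc) (filter (\<lambda>i. bit s i) [0..<n]) (bit s n \<and> x n)"
    by simp
  then show ?thesis unfolding pp_def using foldr_x[of x "filter (\<lambda>i. bit s i) [0..<n]" "bit s n \<and> x n"] by simp
qed

lemma pp_low: "s < 2^n \<Longrightarrow> pp (Suc n) x s = pp n x s"
  by (simp add: pp_Suc b1)

lemma pp_high: "s < 2^n \<Longrightarrow> pp (Suc n) x (s + 2^n) = (pp n x s \<noteq> x n)"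
proof -
  assume a: "s < 2^n"
  have "filter (\<lambda>i. bit (s + 2^n) i) [0..<n] = filter (\<lambda>i. bit s i) [0..<n]"
    using a by (intro filter_cong) (auto simp: b3)
  then have "pp n x (s + 2^n) = pp n x s" by (simp add: pp_def)
  then show ?thesis using a by (simp add: pp_Suc b2)
qed

lemma pp_0[simp]: "pp n x 0 = False" by (simp add: pp_def)

lemma cnt: "length (filter (pp n x) [0..<2^n]) = (if \<exists>j<n. x j then 2^(n-1) else 0)"
proof (induction n)
  case 0 then show ?case by simp
next
  case (Suc n)
  let ?A = "[0..<2^n]"
  have split: "[0..<2^Suc n] = ?A @ map (\<lambda>s. s + 2^n) ?A"
    using upt_add_eq_append[of 0 "2^n" "2^n"] map_add_upt[of "2^n" "2^n"] by (simp add: mult_2)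
  have l: "length (filter (pp (Suc n) x) ?A) = length (filter (pp n x) ?A)"
    by (rule arg_cong[where f=length], rule filter_cong) (auto simp: pp_low)
  have h: "length (filter (pp (Suc n) x) (map (\<lambda>s. s + 2^n) ?A)) = length (filter (\<lambda>s. pp n x s \<noteq> x n) ?A)"
    by (simp add: o_def, rule arg_cong[where f=length], rule filter_cong) (auto simp: pp_high)
  have c: "length (filter (pp n x) ?A) + length (filter (\<lambda>s. \<not> pp n x s) ?A) = 2^n"
    using sum_length_filter_compl[of "pp n x" ?A] by simp
  have tot: "length (filter (pp (Suc n) x) [0..<2^Suc n]) = length (filter (pp n x) ?A) + (if x n then 2^n - length (filter (pp n x) ?A) else length (filter (pp n x) ?A))"
    using c by (simp only: split filter_append length_append l h) (cases "x n"; simp)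
  show ?case
  proof (cases "\<exists>j<n. x j")
    case True
    then have "n \<ge> 1" by auto
    then have "(2::nat)^n = 2 * 2^(n-1)" by (cases n) auto
    then show ?thesis using True tot Suc.IH by (auto simp: less_Suc_eq)
  next
    case False
    then show ?thesis using tot Suc.IH by (auto simp: less_Suc_eq)
  qed
qed


lemma cwinj: assumes "(i::nat) * N + s = i' * N + s'" "s < N" "s' < N" shows "i = i' \<and> s = s'"
proof -
  have "(i * N + s) mod N = s" "(i' * N + s') mod N = s'" using assms(2,3) by simp_all
  then have "s = s'" using assms(1) by metis
  then show ?thesis using assms by auto
qed
lemma nz: "(s::nat) \<noteq> 0 \<Longrightarrow> \<exists>i. bit s i"
  using bit_eq_iff[of s 0] by auto
lemma bl: "(s::nat) < 2^n \<Longrightarrow> bit s i \<Longrightarrow> i < n"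
  by (metis bit_take_bit_iff take_bit_nat_eq_self_iff)

definition qw :: "nat \<Rightarrow> nat \<Rightarrow> nat" where "qw n s = n + 2 + s"
definition cw :: "nat \<Rightarrow> nat \<Rightarrow> nat \<Rightarrow> nat" where "cw n i s = n + 2 + 2^n + i * 2^n + s"
definition Tset :: "nat \<Rightarrow> nat \<Rightarrow> nat list" where
  "Tset n s = map (\<lambda>i. cw n i s) (filter (\<lambda>i. bit s i) [0..<n])"
definition BLn :: "nat \<Rightarrow> (nat \<times> nat list) list" where
  "BLn n = map (\<lambda>s. (qw n s, Tset n s)) [1..<2^n]"
definition LFOn :: "nat \<Rightarrow> (nat \<times> nat list) list" where
  "LFOn n = (Suc n, map (qw n) [0..<2^n]) # map (\<lambda>i. (i, map (cw n i) [0..<2^n])) [0..<n]"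
definition qsn :: "nat \<Rightarrow> nat list" where "qsn n = map (qw n) [0..<2^n]"

lemma distinct_concat_map:
  "distinct xs \<Longrightarrow> (\<forall>x\<in>set xs. distinct (f x)) \<Longrightarrow>
   (\<forall>x\<in>set xs. \<forall>y\<in>set xs. x \<noteq> y \<longrightarrow> set (f x) \<inter> set (f y) = {}) \<Longrightarrow> distinct (concat (map f xs))"
  by (induction xs) fastforce+

lemma cw_eq: "s < 2^n \<Longrightarrow> s' < 2^n \<Longrightarrow> cw n i s = cw n i' s' \<longleftrightarrow> i = i' \<and> s = s'"
  unfolding cw_def using cwinj[of i "2^n" s i' s'] by auto

lemma cw_ge: "cw n i s \<ge> n + 2 + 2^n" by (simp add: cw_def)
lemma cw_lt: "i < n \<Longrightarrow> s < 2^n \<Longrightarrow> cw n i s < n + 2 + 2^n + n * 2^n"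
proof -
  assume "i < n" "s < 2^n"
  then have "i * 2^n + s < (i+1) * 2^n" by simp
  also have "\<dots> \<le> n * 2^n" using \<open>i < n\<close> by (intro mult_right_mono) auto
  finally show ?thesis by (simp add: cw_def)
qed

lemma wl_map: "wl (map (\<lambda>x. (g x, h x)) xs) = concat (map (\<lambda>x. g x # h x) xs)"
  by (simp add: wl_def o_def)

lemma cw_ne: "x < n + 2 + 2^n \<Longrightarrow> cw n i s \<noteq> x" using cw_ge[of n i s] by linarith

lemma distinct_LFO: "distinct (wl (LFOn n))"
proof -
  define A where "A = concat (map (\<lambda>i. i # map (cw n i) [0..<2^n]) [0..<n])"
  define Q where "Q = map (qw n) [0..<2^n]"
  have w: "wl (LFOn n) = Suc n # Q @ A"
    by (simp add: LFOn_def wl_map A_def Q_def)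
  have dA: "distinct A" unfolding A_def
  proof (rule distinct_concat_map)
    show "\<forall>x\<in>set [0..<n]. distinct (x # map (cw n x) [0..<2 ^ n])"
    proof
      fix x assume "x \<in> set [0..<n]"
      have ne: "cw n x s \<noteq> x" for s using \<open>x \<in> set [0..<n]\<close> by (intro cw_ne) auto
      have "inj_on (cw n x) {0..<2^n}" by (auto simp: inj_on_def cw_eq)
      moreover have "x \<notin> cw n x ` {0..<2^n}" using ne by (metis imageE)
      ultimately show "distinct (x # map (cw n x) [0..<2 ^ n])" by (simp add: distinct_map)
    qed
    show "\<forall>x\<in>set [0..<n]. \<forall>y\<in>set [0..<n]. x \<noteq> y \<longrightarrow> set (x # map (cw n x) [0..<2 ^ n]) \<inter> set (y # map (cw n y) [0..<2 ^ n]) = {}"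
    proof (intro ballI impI)
      fix x y assume xy: "x \<in> set [0..<n]" "y \<in> set [0..<n]" "x \<noteq> y"
      have "cw n x s \<noteq> y" "cw n y s \<noteq> x" for s using xy by (auto intro!: cw_ne)
      moreover have "cw n x s \<noteq> cw n y s'" if "s < 2^n" "s' < 2^n" for s s' using that xy by (simp add: cw_eq)
      ultimately show "set (x # map (cw n x) [0..<2 ^ n]) \<inter> set (y # map (cw n y) [0..<2 ^ n]) = {}"
        using xy by auto
    qed
  qed simp
  have bA: "j < n \<or> j \<ge> n + 2 + 2^n" if "j \<in> set A" for j
    using that cw_ge unfolding A_def by auto
  have bQ: "n + 2 \<le> j \<and> j < n + 2 + 2^n" if "j \<in> set Q" for j
    using that unfolding Q_def by (auto simp: qw_def)
  have "Suc n \<notin> set A" using bA by fastforce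
  moreover have "set Q \<inter> set A = {}" using bA bQ by fastforce
  moreover have "Suc n \<notin> set Q" using bQ by fastforce
  moreover have "distinct Q" by (simp add: Q_def distinct_map inj_on_def qw_def)
  ultimately show ?thesis using dA w by simp
qed

lemma qw_lt: "s < 2^n \<Longrightarrow> qw n s < n + 2 + 2^n" by (simp add: qw_def)

lemma distinct_BL: "distinct (wl (BLn n))"
proof -
  have w: "wl (BLn n) = concat (map (\<lambda>s. qw n s # Tset n s) [1..<2^n])"
    by (simp add: BLn_def wl_map)
  show ?thesis unfolding w
  proof (rule distinct_concat_map)
    show "\<forall>s\<in>set [1..<2^n]. distinct (qw n s # Tset n s)"
    proof
      fix s assume s: "s \<in> set [1..<2^n]"
      have "inj_on (\<lambda>i. cw n i s) (set (filter (\<lambda>i. bit s i) [0..<n]))"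
        using s by (auto simp: inj_on_def cw_eq)
      moreover have "qw n s \<noteq> cw n i s" for i using s qw_lt[of s n] cw_ge[of n i s] by auto
      ultimately show "distinct (qw n s # Tset n s)" by (auto simp: Tset_def distinct_map)
    qed
    show "\<forall>s\<in>set [1..<2^n]. \<forall>s'\<in>set [1..<2^n]. s \<noteq> s' \<longrightarrow> set (qw n s # Tset n s) \<inter> set (qw n s' # Tset n s') = {}"
    proof (intro ballI impI)
      fix s s' assume ss: "s \<in> set [1..<2^n]" "s' \<in> set [1..<2^n]" "s \<noteq> s'"
      have "qw n s \<noteq> cw n i s'" "qw n s' \<noteq> cw n i s" for i
        using ss qw_lt[of s n] qw_lt[of s' n] cw_ge[of n i s] cw_ge[of n i s'] by auto
      moreover have "cw n i s \<noteq> cw n i' s'" for i i' using ss by (simp add: cw_eq)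
      moreover have "qw n s \<noteq> qw n s'" using ss by (simp add: qw_def)
      ultimately show "set (qw n s # Tset n s) \<inter> set (qw n s' # Tset n s') = {}"
        by (auto simp: Tset_def)
    qed
  qed simp
qed

lemma par_map: "par b (map f xs) = foldr (\<lambda>i acc. b (f i) \<noteq> acc) xs False"
  by (induction xs) auto

lemma foldr_xcong: "(\<And>i. i \<in> set xs \<Longrightarrow> g i = h i) \<Longrightarrow> foldr (\<lambda>i acc. g i \<noteq> acc) xs c = foldr (\<lambda>i acc. h i \<noteq> acc) xs c"
  by (induction xs) auto

lemma val: assumes s: "s < 2^n"
  shows "parmap (BLn n) (fomap (LFOn n) ((layout n x z)(Suc n := v))) (qw n s) = (v \<noteq> pp n x s)"
proof -
  let ?c = "(layout n x z)(Suc n := v)"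
  let ?b1 = "fomap (LFOn n) ?c"
  have q: "?b1 (qw n s') = v" if "s' < 2^n" for s'
  proof -
    have "(Suc n, map (qw n) [0..<2^n]) \<in> set (LFOn n)" by (simp add: LFOn_def)
    moreover have "qw n s' \<in> set (map (qw n) [0..<2^n])" using that by simp
    ultimately have "?b1 (qw n s') = (?c (qw n s') \<noteq> ?c (Suc n))" by (rule fo1[OF distinct_LFO])
    then show ?thesis by (simp add: qw_def layout_def)
  qed
  have cc: "?b1 (cw n i s) = x i" if "i < n" for i
  proof -
    have "(i, map (cw n i) [0..<2^n]) \<in> set (LFOn n)" using that by (force simp: LFOn_def)
    moreover have "cw n i s \<in> set (map (cw n i) [0..<2^n])" using s by simp
    ultimately have "?b1 (cw n i s) = (?c (cw n i s) \<noteq> ?c i)" by (rule fo1[OF distinct_LFO])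
    moreover have "?c (cw n i s) = False" using cw_ge[of n i s] by (simp add: layout_def)
    moreover have "?c i = x i" using that by (simp add: layout_def)
    ultimately show ?thesis by simp
  qed
  show ?thesis
  proof (cases "s = 0")
    case True
    have "qw n 0 \<notin> fst ` set (BLn n)" by (auto simp: BLn_def qw_def)
    then show ?thesis using True q[of 0] by (simp add: pm2)
  next
    case False
    then have "(qw n s, Tset n s) \<in> set (BLn n)" using s by (auto simp: BLn_def)
    then have "parmap (BLn n) ?b1 (qw n s) = (?b1 (qw n s) \<noteq> par ?b1 (Tset n s))"
      by (rule pm1[OF distinct_BL])
    moreover have "par ?b1 (Tset n s) = pp n x s"
      unfolding Tset_def par_map pp_def using cc by (intro foldr_xcong) auto
    ultimately show ?thesis using q[OF s] by simp
  qed
qed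

lemma prod_if: "prod_list (map (\<lambda>s. if P s then w else 1) xs) = w ^ length (filter P xs)"
  by (induction xs) auto

definition Uc :: "nat \<Rightarrow> real \<Rightarrow> gate list list" where
  "Uc n \<phi> = UL (LFOn n) (BLn n) \<phi> (qsn n) (Suc n)"

lemma e_val: "phase \<phi> (qsn n) (parmap (BLn n) (fomap (LFOn n) ((layout n x z)(Suc n := v))))
   = cis \<phi> ^ length (filter (\<lambda>s. v \<noteq> pp n x s) [0..<2^n])"
proof -
  have "phase \<phi> (qsn n) (parmap (BLn n) (fomap (LFOn n) ((layout n x z)(Suc n := v))))
     = prod_list (map (\<lambda>s. if v \<noteq> pp n x s then cis \<phi> else 1) [0..<2^n])"
    unfolding phase_def qsn_def map_map o_def
    by (rule arg_cong[where f=prod_list], rule map_cong) (auto simp: val)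
  then show ?thesis by (simp add: prod_if)
qed

lemma U_or: assumes "\<exists>j<n. x j"
  shows "apply_circuit (concat (Uc n \<phi>)) (ket ((layout n x z)(Suc n := \<alpha>)))
     = (\<lambda>b. cis \<phi> ^ 2^(n-1) * ket ((layout n x z)(Suc n := \<alpha>)) b)"
proof -
  let ?c = "layout n x z"
  have c0: "length (filter (pp n x) [0..<2^n]) = 2^(n-1)" using cnt[of n x] assms by simp
  have n1: "n \<ge> 1" using assms by auto
  then have "(2::nat)^n = 2 * 2^(n-1)" by (cases n) auto
  then have c1: "length (filter (\<lambda>s. \<not> pp n x s) [0..<2^n]) = 2^(n-1)"
    using sum_length_filter_compl[of "pp n x" "[0..<2^n]"] c0 by simp
  have eF: "phase \<phi> (qsn n) (parmap (BLn n) (fomap (LFOn n) (?c(Suc n := False)))) = cis \<phi> ^ 2^(n-1)"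
    using e_val[of \<phi> n x z False] c0 by simp
  have eT: "phase \<phi> (qsn n) (parmap (BLn n) (fomap (LFOn n) (?c(Suc n := True)))) = cis \<phi> ^ 2^(n-1)"
    using e_val[of \<phi> n x z True] c1 by simp
  show ?thesis
    unfolding Uc_def U_sem[OF distinct_LFO distinct_BL] eF eT
    by (cases \<alpha>) (auto simp: Hd_eq hh2 intro!: ext simp flip: distrib_left distrib_right)
qed

lemma U_nor: assumes "\<not> (\<exists>j<n. x j)" "cis \<phi> ^ 2^n = -1"
  shows "apply_circuit (concat (Uc n \<phi>)) (ket ((layout n x z)(Suc n := \<alpha>)))
     = ket ((layout n x z)(Suc n := \<not> \<alpha>))"
proof -
  let ?c = "layout n x z"
  have c0: "length (filter (pp n x) [0..<2^n]) = 0" using cnt[of n x] assms by simp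
  then have c1: "length (filter (\<lambda>s. \<not> pp n x s) [0..<2^n]) = 2^n"
    using sum_length_filter_compl[of "pp n x" "[0..<2^n]"] by simp
  have eF: "phase \<phi> (qsn n) (parmap (BLn n) (fomap (LFOn n) (?c(Suc n := False)))) = 1"
    using e_val[of \<phi> n x z False] c0 by simp
  have eT: "phase \<phi> (qsn n) (parmap (BLn n) (fomap (LFOn n) (?c(Suc n := True)))) = -1"
    using e_val[of \<phi> n x z True] c1 assms(2) by simp
  show ?thesis
    unfolding Uc_def U_sem[OF distinct_LFO distinct_BL] eF eT
    by (cases \<alpha>) (auto simp: Hd_eq hh2 intro!: ext simp flip: distrib_left distrib_right)
qed

definition Xg :: "bool \<Rightarrow> bool \<Rightarrow> complex" where "Xg u v = (if u \<noteq> v then 1 else 0)"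

lemma CNOT_ket: "c \<noteq> t \<Longrightarrow> apply_gate (CNOT c t) (ket b0) = ket (b0(t := b0 t \<noteq> b0 c))"
  by (auto simp: ket_def fun_eq_iff)

lemma X_ket: "apply_gate (G1 q Xg) (ket b0) = ket (b0(q := \<not> b0 q))"
  by (cases "b0 q") (auto simp: G1_ket Xg_def simp del: apply_gate.simps)

definition phin :: "nat \<Rightarrow> real" where "phin n = pi / 2^n"

definition CL :: "nat \<Rightarrow> gate list list" where
  "CL n = Uc n (phin n) @ [[CNOT (Suc n) n], [G1 n Xg]] @ Uc n (- phin n)"

lemma cis_mpi: "cis (- pi) = -1" by (simp add: complex_eq_iff)
lemma cis_pow: "cis (phin n) ^ 2^n = -1" "cis (- phin n) ^ 2^n = -1"
  by (simp_all add: DeMoivre phin_def cis_mpi)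

lemma lay_upd: "((layout n x z)(Suc n := v))(n := w) = (layout n x w)(Suc n := v)"
  by (auto simp: layout_def fun_eq_iff)
lemma lay_F: "(layout n x z)(Suc n := False) = layout n x z"
  by (auto simp: layout_def fun_eq_iff)
lemma lay_at: "layout n x z n = z" by (simp add: layout_def)
lemma lay_n: "((layout n x z)(Suc n := v)) n = z" "((layout n x z)(Suc n := v)) (Suc n) = v"
  by (auto simp: layout_def)

lemma main_sem: "apply_circuit (concat (CL n)) (ket (layout n x z)) = ket (layout n x (z \<noteq> OR_fun n x))"
proof (cases "\<exists>j<n. x j")
  case True
  have "apply_circuit (concat (CL n)) (ket (layout n x z))
      = apply_circuit (concat (Uc n (- phin n))) (apply_gate (G1 n Xg) (apply_gate (CNOT (Suc n) n)
          (apply_circuit (concat (Uc n (phin n))) (ket ((layout n x z)(Suc n := False))))))"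
    by (simp add: CL_def AC_app lay_F del: apply_gate.simps)
  also have "\<dots> = apply_circuit (concat (Uc n (- phin n))) (\<lambda>b. cis (phin n) ^ 2^(n-1) * ket ((layout n x (\<not> z))(Suc n := False)) b)"
    by (simp add: U_or[OF True] gate_scal CNOT_ket X_ket lay_upd lay_n lay_at del: apply_gate.simps)
  also have "\<dots> = (\<lambda>b. (cis (phin n) ^ 2^(n-1) * cis (- phin n) ^ 2^(n-1)) * ket ((layout n x (\<not> z))(Suc n := False)) b)"
    by (simp add: AC_scal U_or[OF True] mult.assoc)
  also have "\<dots> = ket (layout n x (z \<noteq> OR_fun n x))"
    using True by (simp add: power_mult_distrib[symmetric] cis_mult lay_F OR_fun_def)
  finally show ?thesis .
next
  case False
  have "apply_circuit (concat (CL n)) (ket (layout n x z))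
      = apply_circuit (concat (Uc n (- phin n))) (apply_gate (G1 n Xg) (apply_gate (CNOT (Suc n) n)
          (apply_circuit (concat (Uc n (phin n))) (ket ((layout n x z)(Suc n := False))))))"
    by (simp add: CL_def AC_app lay_F del: apply_gate.simps)
  also have "\<dots> = apply_circuit (concat (Uc n (- phin n))) (ket ((layout n x z)(Suc n := True)))"
    by (simp add: U_nor[OF False cis_pow(1)] CNOT_ket X_ket lay_upd lay_n lay_at del: apply_gate.simps)
  also have "\<dots> = ket (layout n x (z \<noteq> OR_fun n x))"
    using False by (simp add: U_nor[OF False cis_pow(2)] lay_F OR_fun_def)
  finally show ?thesis .
qed

lemma gate_wires_ne: "gate_wires g \<noteq> []" by (cases g) auto

lemma step_bound:
  assumes "\<forall>i\<in>set (gate_wires g). fst s i \<le> K" "\<forall>i. fst s i \<le> Suc K" "snd s \<le> Suc K"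
  shows "(\<forall>i. fst (layer_step s g) i \<le> Suc K) \<and> snd (layer_step s g) \<le> Suc K \<and>
         (\<forall>i. i \<notin> set (gate_wires g) \<longrightarrow> fst (layer_step s g) i = fst s i)"
proof -
  have "Max (fst s ` set (gate_wires g)) \<le> K"
    using assms(1) gate_wires_ne[of g] by (subst Max_le_iff) auto
  then show ?thesis using assms(2,3) by (auto simp: layer_step_def Let_def)
qed

lemma layer_bound:
  "distinct (concat (map gate_wires L)) \<Longrightarrow> (\<forall>i\<in>set (concat (map gate_wires L)). fst s i \<le> K) \<Longrightarrow>
   (\<forall>i. fst s i \<le> Suc K) \<Longrightarrow> snd s \<le> Suc K \<Longrightarrow>
   (\<forall>i. fst (foldl layer_step s L) i \<le> Suc K) \<and> snd (foldl layer_step s L) \<le> Suc K"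
proof (induction L arbitrary: s)
  case Nil then show ?case by simp
next
  case (Cons g L)
  have h: "(\<forall>i. fst (layer_step s g) i \<le> Suc K) \<and> snd (layer_step s g) \<le> Suc K \<and>
         (\<forall>i. i \<notin> set (gate_wires g) \<longrightarrow> fst (layer_step s g) i = fst s i)"
    using Cons.prems by (intro step_bound) auto
  have k: "\<forall>i\<in>set (concat (map gate_wires L)). fst (layer_step s g) i \<le> K"
  proof
    fix i assume i: "i \<in> set (concat (map gate_wires L))"
    then have "i \<notin> set (gate_wires g)" using Cons.prems(1) by auto
    then show "fst (layer_step s g) i \<le> K" using h Cons.prems(2) i by auto
  qed
  have "distinct (concat (map gate_wires L))" using Cons.prems(1) by simp
  then show ?case using Cons.IH k h by simp
qed

lemma layers_bound:
  "(\<forall>L\<in>set LS. distinct (concat (map gate_wires L))) \<Longrightarrow> (\<forall>i. fst s i \<le> K) \<Longrightarrow> snd s \<le> K \<Longrightarrow>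
   (\<forall>i. fst (foldl layer_step s (concat LS)) i \<le> K + length LS) \<and> snd (foldl layer_step s (concat LS)) \<le> K + length LS"
proof (induction LS arbitrary: s K)
  case Nil then show ?case by simp
next
  case (Cons L LS)
  have h: "(\<forall>i. fst (foldl layer_step s L) i \<le> Suc K) \<and> snd (foldl layer_step s L) \<le> Suc K"
  proof (rule layer_bound)
    show "\<forall>i. fst s i \<le> Suc K" using Cons.prems(2) le_SucI by blast
  qed (use Cons.prems in auto)
  have "(\<forall>i. fst (foldl layer_step (foldl layer_step s L) (concat LS)) i \<le> Suc K + length LS) \<and>
        snd (foldl layer_step (foldl layer_step s L) (concat LS)) \<le> Suc K + length LS"
    using Cons.prems h by (intro Cons.IH) auto
  then show ?case by simp
qed

lemma wires_FBL: "concat (map gate_wires (FBL L)) = wl L"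
  by (induction L) (auto simp: FBL_def)
lemma wires_HBL: "concat (map gate_wires (HBL L)) = wl L"
  by (simp add: HBL_def Hq_def o_def)
lemma wires_PHL: "concat (map gate_wires (PHL \<phi> qs)) = qs"
  by (induction qs) (auto simp: PHL_def)

lemma CL_layers: "L \<in> set (CL n) \<Longrightarrow> L \<in> {[Hq (Suc n)], FBL (LFOn n), HBL (BLn n), FBL (BLn n),
   PHL (phin n) (qsn n), PHL (- phin n) (qsn n), [CNOT (Suc n) n], [G1 n Xg]}"
  by (auto simp: CL_def Uc_def UL_def MidL_def)

lemma distinct_qsn: "distinct (qsn n)" by (simp add: qsn_def distinct_map inj_on_def qw_def)

lemma depth_CL: "circuit_depth (concat (CL n)) \<le> 24"
proof -
  have "\<forall>L\<in>set (CL n). distinct (concat (map gate_wires L))"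
  proof
    fix L assume "L \<in> set (CL n)"
    then show "distinct (concat (map gate_wires L))"
      using CL_layers[of L n] distinct_LFO[of n] distinct_BL[of n] distinct_qsn[of n]
      by (auto simp: wires_FBL wires_HBL wires_PHL Hq_def)
  qed
  from layers_bound[OF this, of "(\<lambda>_. 0, 0)" 0] have "snd (foldl layer_step (\<lambda>_. 0, 0) (concat (CL n))) \<le> length (CL n)"
    by simp
  moreover have "length (CL n) = 24" by (simp add: CL_def Uc_def UL_def MidL_def)
  ultimately show ?thesis by (simp add: circuit_depth_def)
qed

definition mm :: "nat \<Rightarrow> nat" where "mm n = n + 2 + 2^n + n * 2^n"

lemma cnj_hh: "cnj hh = hh" by (simp add: hh_def)

lemma unitary_Hd: "unitary2 Hd"
  by (auto simp: unitary2_def UNIV_bool' Hd_eq cnj_hh hh2)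
lemma unitary_Pg: "unitary2 (Pg \<phi>)"
  by (auto simp: unitary2_def UNIV_bool' Pg_def cis_cnj cis_mult)
lemma unitary_Xg: "unitary2 Xg"
  by (auto simp: unitary2_def UNIV_bool' Xg_def)

lemma wl_LFO_lt: "w \<in> set (wl (LFOn n)) \<Longrightarrow> w < mm n"
  using cw_lt by (auto simp: LFOn_def wl_map mm_def qw_def)

lemma wl_BL_lt: "w \<in> set (wl (BLn n)) \<Longrightarrow> w < mm n"
  using cw_lt by (force simp: BLn_def wl_map mm_def qw_def Tset_def)

lemma wf_HBL: "(\<And>w. w \<in> set (wl L) \<Longrightarrow> w < m) \<Longrightarrow> g \<in> set (HBL L) \<Longrightarrow> gate_wf m g"
  by (auto simp: HBL_def Hq_def unitary_Hd)

lemma wf_FBL: assumes "distinct (wl L)" "\<And>w. w \<in> set (wl L) \<Longrightarrow> w < m" "\<forall>(y,T)\<in>set L. T \<noteq> []"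
    "g \<in> set (FBL L)"
  shows "gate_wf m g"
proof -
  obtain y T where g: "g = Fanout y T" "(y,T) \<in> set L" using assms(4) by (auto simp: FBL_def)
  have "y \<notin> set T" using wl_disj[OF assms(1) g(2) g(2)] .
  moreover have "distinct T" using assms(1) g(2) by (induction L) auto
  moreover have "y < m" "\<forall>t\<in>set T. t < m" using assms(2) g(2) by (auto simp: set_wl)
  ultimately show ?thesis using g assms(3) by auto
qed

lemma Tset_ne: "s \<in> set [1..<2^n] \<Longrightarrow> Tset n s \<noteq> []"
proof -
  assume "s \<in> set [1..<2^n]"
  then have s: "s \<noteq> 0" "s < 2^n" by auto
  obtain i where "bit s i" using nz[OF s(1)] by auto
  moreover have "i < n" using bl[OF s(2) \<open>bit s i\<close>] .
  ultimately show ?thesis by (auto simp: Tset_def filter_empty_conv)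
qed

lemma wf_CL: "circuit_wf (mm n) (concat (CL n))"
  unfolding circuit_wf_def
proof
  fix g assume "g \<in> set (concat (CL n))"
  then obtain L where L: "L \<in> set (CL n)" "g \<in> set L" by auto
  have ne1: "\<forall>(y,T)\<in>set (LFOn n). T \<noteq> []" by (auto simp: LFOn_def)
  have ne2: "\<forall>(y,T)\<in>set (BLn n). T \<noteq> []" using Tset_ne by (auto simp: BLn_def)
  have q: "q \<in> set (qsn n) \<Longrightarrow> q < mm n" for q by (auto simp: qsn_def qw_def mm_def)
  have h1: "gate_wf (mm n) g" if "g \<in> set (HBL (LFOn n)) \<or> g \<in> set (HBL (BLn n))"
    using that wf_HBL[where L="LFOn n" and m="mm n" and g=g, OF wl_LFO_lt]
      wf_HBL[where L="BLn n" and m="mm n" and g=g, OF wl_BL_lt] by blast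
  have h2: "gate_wf (mm n) g" if "g \<in> set (FBL (LFOn n)) \<or> g \<in> set (FBL (BLn n))"
    using that wf_FBL[where L="LFOn n" and m="mm n" and g=g, OF distinct_LFO wl_LFO_lt ne1]
      wf_FBL[where L="BLn n" and m="mm n" and g=g, OF distinct_BL wl_BL_lt ne2] by blast
  have h3: "gate_wf (mm n) g" if "g \<in> set (PHL \<phi> (qsn n))" for \<phi>
    using that q by (auto simp: PHL_def unitary_Pg)
  have h4: "gate_wf (mm n) g" if "g \<in> {Hq (Suc n), CNOT (Suc n) n, G1 n Xg}"
    using that by (auto simp: Hq_def unitary_Hd unitary_Xg mm_def)
  show "gate_wf (mm n) g"
    using CL_layers[OF L(1)] L(2) h1 h2 h3 h4 by auto
qed

lemma size_conc: "circuit_size gs = length (concat (map gate_wires gs))"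
  by (induction gs) (auto simp: circuit_size_def)

lemma size_concat: "circuit_size (concat LS) = sum_list (map circuit_size LS)"
  by (induction LS) (auto simp: circuit_size_def)

lemma sum_bound: "(\<forall>x\<in>set xs. f x \<le> (B::nat)) \<Longrightarrow> sum_list (map f xs) \<le> length xs * B"
  by (induction xs) auto

lemma len_LFO: "length (wl (LFOn n)) = (n+1) * (2^n + 1)"
proof -
  have "length (wl (LFOn n)) = Suc (2^n) + sum_list (map (\<lambda>i. Suc (2^n)) [0..<n])"
    by (simp add: LFOn_def wl_map length_concat o_def)
  also have "\<dots> = (n+1) * (2^n + 1)" by (simp add: sum_list_triv)
  finally show ?thesis .
qed

lemma len_BL: "length (wl (BLn n)) \<le> (n+1) * (2^n + 1)"
proof -
  have "length (wl (BLn n)) = sum_list (map (\<lambda>s. Suc (length (Tset n s))) [1..<2^n])"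
    by (simp add: BLn_def wl_map length_concat o_def)
  also have "\<dots> \<le> length [1..<2^n] * (n+1)"
    by (rule sum_bound) (auto simp: Tset_def intro: le_trans[OF length_filter_le])
  also have "\<dots> \<le> (2^n + 1) * (n+1)" by (intro mult_right_mono) auto
  finally show ?thesis by (simp add: mult.commute)
qed

lemma size_CL: assumes "n \<ge> 1" shows "circuit_size (concat (CL n)) \<le> 100 * n * 2^n"
proof -
  have b: "(n+1) * (2^n + 1) \<le> 4 * n * 2^n"
  proof -
    have "(n+1) * (2^n+1) \<le> (2*n) * (2 * 2^n)" using assms
      by (intro mult_mono) auto
    then show ?thesis by simp
  qed
  have one: "2 \<le> 4 * n * 2^n"
  proof -
    have "1 \<le> n * 2^n" using assms by simp
    then show ?thesis by simp
  qed
  have "\<forall>L\<in>set (CL n). circuit_size L \<le> 4 * n * 2^n"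
  proof
    fix L assume "L \<in> set (CL n)"
    moreover have "2^n \<le> 4 * n * 2^n" using assms by simp
    ultimately show "circuit_size L \<le> 4 * n * 2^n"
      using CL_layers[of L n] b one len_BL[of n] len_LFO[of n]
      by (auto simp: size_conc wires_FBL wires_HBL wires_PHL Hq_def qsn_def)
  qed
  then have "circuit_size (concat (CL n)) \<le> length (CL n) * (4 * n * 2^n)"
    unfolding size_concat by (rule sum_bound)
  moreover have "length (CL n) = 24" by (simp add: CL_def Uc_def UL_def MidL_def)
  ultimately show ?thesis by simp
qed

theorem lemma2:
  shows "\<exists>(C :: nat \<Rightarrow> gate list) (m :: nat \<Rightarrow> nat) (d :: nat) (c :: nat).
           \<forall>n\<ge>1. implements_OR n (m n) (C n) \<and> circuit_depth (C n) \<le> d \<and>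
                  circuit_size (C n) \<le> c * n * 2 ^ n"
proof (intro exI allI impI conjI)
  fix n :: nat assume n: "n \<ge> 1"
  show "implements_OR n (mm n) (concat (CL n))"
    unfolding implements_OR_def using wf_CL main_sem by (auto simp: mm_def)
  show "circuit_depth (concat (CL n)) \<le> 24" by (rule depth_CL)
  show "circuit_size (concat (CL n)) \<le> 100 * n * 2^n" using size_CL[OF n] .
qed

end
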